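(* Every quotient of a finite weakly-top group is weakly-top. Every quotient of a finite top group is top.
   Context: For a group $H$, $H'$ denotes its commutator subgroup. A finite group $G$ is weakly-top if $|H/H'| \leq |G/G'|$ for every proper subgroup $H<G$, and top if $|H/H'| < |G/G'|$ for every proper subgroup $H<G$. *)

theory Defs
  imports "HOL-Algebra.Algebra"
begin

text \<open>The order of the abelianization H/H' of a subgroup H of G, where
  H' = derived G H is the commutator subgroup of H (generated by commutators
  of elements of H).\<close>
definition abel_order :: "('a, 'b) monoid_scheme \<Rightarrow> 'a set \<Rightarrow> nat" where
  "abel_order G H = card ((\<lambda>h. derived G H #>\<^bsub>G\<^esub> h) ` H)"

definition weakly_top :: "('a, 'b) monoid_scheme \<Rightarrow> bool" where
  "weakly_top G \<longleftrightarrow> group G \<and> finite (carrier G) \<and>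
     (\<forall>H. subgroup H G \<and> H \<noteq> carrier G \<longrightarrow> abel_order G H \<le> abel_order G (carrier G))"

definition top_group :: "('a, 'b) monoid_scheme \<Rightarrow> bool" where
  "top_group G \<longleftrightarrow> group G \<and> finite (carrier G) \<and>
     (\<forall>H. subgroup H G \<and> H \<noteq> carrier G \<longrightarrow> abel_order G H < abel_order G (carrier G))"

end

theory Submission
  imports Defs
begin

lemma card_image_eqrel:
  assumes "\<And>x y. x \<in> A \<Longrightarrow> y \<in> A \<Longrightarrow> (f x = f y) = (g x = g y)"
  shows "card (f ` A) = card (g ` A)"
proof -
  define r where "r = (%Z. f (SOME x. x \<in> A \<and> g x = Z))"
  have img: "f ` A = r ` (g ` A)"
  proof (intro equalityI subsetI)
    fix z assume "z \<in> f ` A"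
    then obtain x where x: "x \<in> A" "z = f x" by blast
    have "(SOME y. y \<in> A \<and> g y = g x) \<in> A \<and> g (SOME y. y \<in> A \<and> g y = g x) = g x"
      by (rule someI[of _ x]) (use x in auto)
    then have "r (g x) = f x" unfolding r_def using assms x by blast
    then show "z \<in> r ` (g ` A)" using x by force
  next
    fix z assume "z \<in> r ` (g ` A)"
    then obtain x where x: "x \<in> A" "z = r (g x)" by blast
    have "(SOME y. y \<in> A \<and> g y = g x) \<in> A \<and> g (SOME y. y \<in> A \<and> g y = g x) = g x"
      by (rule someI[of _ x]) (use x in auto)
    then show "z \<in> f ` A" unfolding x r_def by blast
  qed
  have "inj_on r (g ` A)"
  proof (rule inj_onI)
    fix U V assume "U \<in> g ` A" "V \<in> g ` A" and e: "r U = r V"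
    then obtain x y where xy: "x \<in> A" "y \<in> A" "U = g x" "V = g y" by blast
    have sx: "(SOME z. z \<in> A \<and> g z = U) \<in> A \<and> g (SOME z. z \<in> A \<and> g z = U) = U"
      by (rule someI[of _ x]) (use xy in auto)
    have sy: "(SOME z. z \<in> A \<and> g z = V) \<in> A \<and> g (SOME z. z \<in> A \<and> g z = V) = V"
      by (rule someI[of _ y]) (use xy in auto)
    show "U = V" using e sx sy assms unfolding r_def by metis
  qed
  then show ?thesis using img card_image by metis
qed

lemma (in group) rcos_eq_iff:
  assumes "subgroup H G" "x \<in> carrier G" "y \<in> carrier G"
  shows "(H #> x = H #> y) = (x \<otimes> inv y \<in> H)"
proof
  assume "H #> x = H #> y"
  then have "x \<in> H #> y" using rcos_self[OF assms(2,1)] by simp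
  then show "x \<otimes> inv y \<in> H" using subgroup.rcos_module_imp[OF assms(1) is_group assms(3)] by blast
next
  assume "x \<otimes> inv y \<in> H"
  then have "x \<in> H #> y" using subgroup.rcos_module_rev[OF assms(1) is_group assms(3,2)] by blast
  then show "H #> x = H #> y" using repr_independence[OF _ assms(3,1)] by metis
qed

lemma (in group) card_img_rcos:
  assumes fin: "finite (carrier G)" and S: "subgroup S G" and H: "subgroup H G"
  shows "card S = card ((\<lambda>s. H #> s) ` S) * card (S \<inter> H)"
proof -
  interpret S': group "G\<lparr>carrier := S\<rparr>" using subgroup_imp_group[OF S] .
  have SH: "subgroup (S \<inter> H) G" using S H by (rule subgroups_Inter_pair)
  have sub: "subgroup (S \<inter> H) (G\<lparr>carrier := S\<rparr>)" using subgroup_incl[OF SH S] by blast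
  have lag: "card (rcosets\<^bsub>G\<lparr>carrier := S\<rparr>\<^esub> (S \<inter> H)) * card (S \<inter> H) = card S"
    using S'.lagrange[OF sub] by (simp add: order_def)
  have rc: "rcosets\<^bsub>G\<lparr>carrier := S\<rparr>\<^esub> (S \<inter> H) = (\<lambda>s. (S \<inter> H) #> s) ` S"
    unfolding RCOSETS_def r_coset_def by auto
  have "card ((\<lambda>s. (S \<inter> H) #> s) ` S) = card ((\<lambda>s. H #> s) ` S)"
  proof (rule card_image_eqrel)
    fix x y assume xy: "x \<in> S" "y \<in> S"
    then have c: "x \<in> carrier G" "y \<in> carrier G" using subgroup.mem_carrier[OF S] by auto
    have "x \<otimes> inv y \<in> S" using xy S by (simp add: subgroup.m_closed subgroup.m_inv_closed)
    then show "((S \<inter> H) #> x = (S \<inter> H) #> y) = (H #> x = H #> y)"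
      using rcos_eq_iff[OF SH c] rcos_eq_iff[OF H c] by blast
  qed
  then show ?thesis using lag rc by simp
qed

lemma (in group) abel_order_mult:
  assumes fin: "finite (carrier G)" and H: "subgroup H G"
  shows "card H = abel_order G H * card (derived G H)"
proof -
  have D: "subgroup (derived G H) G" using derived_is_subgroup subgroup.subset[OF H] by blast
  have "derived G H \<subseteq> H" using derived_incl[OF _ H] by blast
  then have "H \<inter> derived G H = derived G H" by blast
  then show ?thesis using card_img_rcos[OF fin H D] unfolding abel_order_def by simp
qed



lemma quot_abel:
  assumes G: "group G" and fin: "finite (carrier G)" and N: "N \<lhd> G"
    and H: "subgroup H G" and NH: "N \<subseteq> H"
    and K: "subgroup ((\<lambda>a. N #>\<^bsub>G\<^esub> a) ` H) (G Mod N)"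
  shows "abel_order (G Mod N) ((\<lambda>a. N #>\<^bsub>G\<^esub> a) ` H) * card N
         = abel_order G H * card (derived G H \<inter> N)"
proof -
  interpret G: group G by (rule G)
  interpret Q: group "G Mod N" using normal.factorgroup_is_group[OF N] .
  interpret h: group_hom G "G Mod N" "\<lambda>a. N #>\<^bsub>G\<^esub> a"
    using normal.r_coset_hom_Mod[OF N] by (simp add: group_hom.intro group_hom_axioms.intro G Q.is_group)
  let ?p = "\<lambda>a. N #>\<^bsub>G\<^esub> a"
  have finQ: "finite (carrier (G Mod N))" using fin by (simp add: carrier_FactGroup)
  define D where "D = derived G H"
  have Hc: "H \<subseteq> carrier G" using H by (rule subgroup.subset)
  have DG: "subgroup D G" unfolding D_def using G.derived_is_subgroup[OF Hc] .
  have NG: "subgroup N G" using N by (rule normal_imp_subgroup)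
  have DQ: "subgroup (?p ` D) (G Mod N)"
    using h.subgroup_img_is_subgroup[OF DG] .
  have e1: "card H = abel_order G H * card D" unfolding D_def using G.abel_order_mult[OF fin H] .
  have e2: "card (?p ` H) = abel_order (G Mod N) (?p ` H) * card (derived (G Mod N) (?p ` H))"
    using Q.abel_order_mult[OF finQ K] .
  have dimg: "derived (G Mod N) (?p ` H) = ?p ` D" unfolding D_def using h.derived_img[OF Hc] .
  have e3: "card H = card (?p ` H) * card (H \<inter> N)" using G.card_img_rcos[OF fin H NG] .
  have HN: "H \<inter> N = N" using NH by blast
  have e4: "card D = card (?p ` D) * card (D \<inter> N)" using G.card_img_rcos[OF fin DG NG] .
  have pos: "card (?p ` D) > 0" using subgroup.finite_imp_card_positive[OF DQ finQ] .
  have "abel_order G H * card (D \<inter> N) * card (?p ` D) = abel_order (G Mod N) (?p ` H) * card N * card (?p ` D)"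
    using e1 e2 e3 e4 dimg HN by (simp add: ac_simps) (metis mult.commute)
  then show ?thesis using pos unfolding D_def by simp
qed

theorem lemma2p2:
  fixes G :: "('a, 'b) monoid_scheme" and N :: "'a set"
  assumes "group G" and "finite (carrier G)" and "N \<lhd> G"
  shows "(weakly_top G \<longrightarrow> weakly_top (G Mod N)) \<and> (top_group G \<longrightarrow> top_group (G Mod N))"
proof -
  interpret G: group G by (rule assms(1))
  interpret Q: group "G Mod N" using normal.factorgroup_is_group[OF assms(3)] .
  interpret h: group_hom G "G Mod N" "\<lambda>a. N #>\<^bsub>G\<^esub> a"
    using normal.r_coset_hom_Mod[OF assms(3)]
    by (simp add: group_hom.intro group_hom_axioms.intro assms(1) Q.is_group)
  let ?p = "\<lambda>a. N #>\<^bsub>G\<^esub> a"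
  have fin: "finite (carrier G)" by fact
  have finQ: "finite (carrier (G Mod N))" using fin by (simp add: carrier_FactGroup)
  have imgG: "?p ` carrier G = carrier (G Mod N)" by (simp add: carrier_FactGroup)
  have NG: "subgroup N G" using assms(3) by (rule normal_imp_subgroup)
  have NC: "N \<subseteq> carrier G" using NG by (rule subgroup.subset)
  have Npos: "card N > 0" using subgroup.finite_imp_card_positive[OF NG fin] .
  define b where "b = abel_order G (carrier G)"
  define dG where "dG = card (derived G (carrier G) \<inter> N)"
  have eqG: "abel_order (G Mod N) (carrier (G Mod N)) * card N = b * dG"
    using quot_abel[OF assms(1) fin assms(3) G.subgroup_self NC] imgG Q.subgroup_self
    unfolding b_def dG_def by simp
  have dGpos: "dG > 0"
  proof -
    have "\<one>\<^bsub>G\<^esub> \<in> derived G (carrier G) \<inter> N"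
      using subgroup.one_closed[OF G.derived_is_subgroup[OF subset_refl]] subgroup.one_closed[OF NG] by blast
    moreover have "finite (derived G (carrier G) \<inter> N)" using NC fin finite_subset by blast
    ultimately show ?thesis unfolding dG_def using card_gt_0_iff by blast
  qed
  have key: "\<exists>H. subgroup H G \<and> H \<noteq> carrier G \<and>
      abel_order (G Mod N) K * card N = abel_order G H * card (derived G H \<inter> N) \<and>
      card (derived G H \<inter> N) \<le> dG"
    if K: "subgroup K (G Mod N)" "K \<noteq> carrier (G Mod N)" for K
  proof -
    define H where "H = {g \<in> carrier G. ?p g \<in> K}"
    have KC: "K \<subseteq> carrier (G Mod N)" using K(1) by (rule subgroup.subset)
    have HK: "?p ` H = K"
    proof
      show "?p ` H \<subseteq> K" unfolding H_def by blast
      show "K \<subseteq> ?p ` H"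
      proof
        fix k assume "k \<in> K"
        then obtain g where "g \<in> carrier G" "k = ?p g" using KC imgG by blast
        then show "k \<in> ?p ` H" unfolding H_def using \<open>k \<in> K\<close> by blast
      qed
    qed
    have HS: "subgroup H G"
    proof (rule G.subgroupI)
      show "H \<subseteq> carrier G" unfolding H_def by blast
      have "?p \<one>\<^bsub>G\<^esub> \<in> K" using h.hom_one subgroup.one_closed[OF K(1)] by simp
      then show "H \<noteq> {}" unfolding H_def by blast
      fix a assume a: "a \<in> H"
      then have "?p (inv\<^bsub>G\<^esub> a) = inv\<^bsub>G Mod N\<^esub> (?p a)" using h.hom_inv unfolding H_def by blast
      then show "inv\<^bsub>G\<^esub> a \<in> H" using a subgroup.m_inv_closed[OF K(1)] unfolding H_def by auto
    next
      fix a b assume ab: "a \<in> H" "b \<in> H"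
      then have "?p (a \<otimes>\<^bsub>G\<^esub> b) = ?p a \<otimes>\<^bsub>G Mod N\<^esub> ?p b" using h.hom_mult unfolding H_def by blast
      then show "a \<otimes>\<^bsub>G\<^esub> b \<in> H" using ab subgroup.m_closed[OF K(1)] unfolding H_def by auto
    qed
    have NH: "N \<subseteq> H"
    proof
      fix n assume n: "n \<in> N"
      then have "?p n = N" using subgroup.rcos_const[OF NG assms(1) n] by simp
      then have "?p n \<in> K" using subgroup.one_closed[OF K(1)] by simp
      then show "n \<in> H" using n NC unfolding H_def by blast
    qed
    have Hne: "H \<noteq> carrier G" using HK imgG K(2) by auto
    have eq: "abel_order (G Mod N) K * card N = abel_order G H * card (derived G H \<inter> N)"
      using quot_abel[OF assms(1) fin assms(3) HS NH] HK K(1) by simp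
    have "derived G H \<inter> N \<subseteq> derived G (carrier G) \<inter> N"
      using G.mono_derived[OF subgroup.subset[OF HS]] by blast
    then have le: "card (derived G H \<inter> N) \<le> dG" unfolding dG_def
      using NC fin finite_subset card_mono by (metis Int_lower2)
    show ?thesis using HS Hne eq le by blast
  qed
  have weak: "weakly_top (G Mod N)" if wt: "weakly_top G"
  proof -
    have "abel_order (G Mod N) K \<le> abel_order (G Mod N) (carrier (G Mod N))"
      if K: "subgroup K (G Mod N)" "K \<noteq> carrier (G Mod N)" for K
    proof -
      obtain H where H: "subgroup H G" "H \<noteq> carrier G"
        "abel_order (G Mod N) K * card N = abel_order G H * card (derived G H \<inter> N)"
        "card (derived G H \<inter> N) \<le> dG" using key[OF K] by blast
      have "abel_order G H \<le> b" using wt H(1,2) unfolding weakly_top_def b_def by blast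
      then have "abel_order G H * card (derived G H \<inter> N) \<le> b * dG"
        using H(4) mult_le_mono by blast
      then have "abel_order (G Mod N) K * card N \<le> abel_order (G Mod N) (carrier (G Mod N)) * card N"
        using H(3) eqG by simp
      then show ?thesis using Npos by simp
    qed
    then show ?thesis unfolding weakly_top_def using Q.is_group finQ by blast
  qed
  have topq: "top_group (G Mod N)" if wt: "top_group G"
  proof -
    have "abel_order (G Mod N) K < abel_order (G Mod N) (carrier (G Mod N))"
      if K: "subgroup K (G Mod N)" "K \<noteq> carrier (G Mod N)" for K
    proof -
      obtain H where H: "subgroup H G" "H \<noteq> carrier G"
        "abel_order (G Mod N) K * card N = abel_order G H * card (derived G H \<inter> N)"
        "card (derived G H \<inter> N) \<le> dG" using key[OF K] by blast
      have lt: "abel_order G H < b" using wt H(1,2) unfolding top_group_def b_def by blast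
      have "abel_order G H * card (derived G H \<inter> N) \<le> abel_order G H * dG"
        using H(4) by simp
      also have "\<dots> < b * dG" using lt dGpos by simp
      finally have "abel_order (G Mod N) K * card N < abel_order (G Mod N) (carrier (G Mod N)) * card N"
        using H(3) eqG by simp
      then show ?thesis using Npos by simp
    qed
    then show ?thesis unfolding top_group_def using Q.is_group finQ by blast
  qed
  show ?thesis using weak topq by blast
qed

end
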